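(* Let $\mathcal{K}\subseteq\mathbb{R}^n$ be a proper convex cone with a $\nu$-LHSCB $f$, and let $A\in\mathbb{R}^{m\times n}$ (full row rank), $\mathbf{b}\in\mathbb{R}^m$, $\mathbf{c}\in\mathbb{R}^n$. Let $\eta>0$, $\tau>0$, $(\mathbf{x},\mathbf{y},\mathbf{s})\in\mathcal{N}(\eta,\tau)$, let $(\Delta\mathbf{x},\Delta\mathbf{y},\Delta\mathbf{s})$ be the solution of the Newton system at $(\mathbf{x},\mathbf{y},\mathbf{s})$ with parameter $\tau$, and let $\mathbf{x}^+=\mathbf{x}+\Delta\mathbf{x}$, $\mathbf{s}^+=\mathbf{s}+\Delta\mathbf{s}$. Then \[\tau(\nu-\eta^2)\le(\mathbf{x}^+)^\top\mathbf{s}^+\le\tau\nu.\]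
   Context: $\mathcal{K}\subseteq\mathbb{R}^n$ is a proper (closed, convex, pointed, full-dimensional) cone with interior $\mathcal{K}^\circ$ and dual cone $\mathcal{K}^*=\{\mathbf{s}:\mathbf{s}^\top\mathbf{x}\ge 0\ \forall \mathbf{x}\in\mathcal{K}\}$. A $\nu$-LHSCB for $\mathcal{K}$ is a strictly convex, three times differentiable $f:\mathcal{K}^\circ\to\mathbb{R}$ with $f(\mathbf{x})\to\infty$ as $\mathbf{x}$ approaches the boundary of $\mathcal{K}$, $|D^3f(\mathbf{x})[\mathbf{h},\mathbf{h},\mathbf{h}]|\le 2\,(D^2f(\mathbf{x})[\mathbf{h},\mathbf{h}])^{3/2}$, $\nu=\sup_{\mathbf{x}\in\mathcal{K}^\circ}g(\mathbf{x})^\top H(\mathbf{x})^{-1}g(\mathbf{x})<\infty$, and $f(t\mathbf{x})=f(\mathbf{x})-\nu\ln t$ for $t>0$; $g,H$ are the gradient and Hessian of $f$. Local norms: $\|\mathbf{v}\|_{\mathbf{x}}=\sqrt{\mathbf{v}^\top H(\mathbf{x})\mathbf{v}}$, $\|\mathbf{v}\|^*_{\mathbf{x}}=\sqrt{\mathbf{v}^\top H(\mathbf{x})^{-1}\mathbf{v}}$. $\mathcal{F}^\circ=\{(\mathbf{x},\mathbf{y},\mathbf{s})\in\mathcal{K}^\circ\times\mathbb{R}^m\times(\mathcal{K}^* )^\circ: A\mathbf{x}=\mathbf{b},\ A^\top\mathbf{y}+\mathbf{s}=\mathbf{c}\}$ (strictly feasible solutions of the pair $\inf\{\mathbf{c}^\top\mathbf{x}:A\mathbf{x}=\mathbf{b},\mathbf{x}\in\mathcal{K}\}$,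 $\sup\{\mathbf{b}^\top\mathbf{y}:A^\top\mathbf{y}+\mathbf{s}=\mathbf{c},\mathbf{s}\in\mathcal{K}^*\}$). $\mathcal{N}(\eta,\tau)=\{(\mathbf{x},\mathbf{y},\mathbf{s})\in\mathcal{F}^\circ:\|\mathbf{s}+\tau g(\mathbf{x})\|^*_{\mathbf{x}}\le\eta\tau\}$. The Newton system at $(\mathbf{x},\mathbf{y},\mathbf{s})$ with parameter $\tau$ is: $A\Delta\mathbf{x}=\mathbf{0}$, $A^\top\Delta\mathbf{y}+\Delta\mathbf{s}=\mathbf{0}$, $\tau H(\mathbf{x})\Delta\mathbf{x}+\Delta\mathbf{s}=-(\mathbf{s}+\tau g(\mathbf{x}))$. *)

theory Defs
  imports "HOL-Analysis.Analysis"
begin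

definition proper_cone :: "(real^'n) set \<Rightarrow> bool" where
  "proper_cone K \<longleftrightarrow> closed K \<and> convex K \<and> cone K \<and>
     K \<inter> uminus ` K = {0} \<and> interior K \<noteq> {}"

definition dual_cone :: "(real^'n) set \<Rightarrow> (real^'n) set" where
  "dual_cone K = {s. \<forall>x\<in>K. s \<bullet> x \<ge> 0}"

definition strictly_convex_on :: "(real^'n) set \<Rightarrow> (real^'n \<Rightarrow> real) \<Rightarrow> bool" where
  "strictly_convex_on S f \<longleftrightarrow>
     (\<forall>x\<in>S. \<forall>y\<in>S. x \<noteq> y \<longrightarrow> (\<forall>u::real. 0 < u \<and> u < 1 \<longrightarrow>
        f ((1 - u) *\<^sub>R x + u *\<^sub>R y) < (1 - u) * f x + u * f y))"

definition dual_local_norm :: "real^'n^'n \<Rightarrow> real^'n \<Rightarrow> real" where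
  "dual_local_norm Hx v = sqrt (v \<bullet> (matrix_inv Hx *v v))"

text \<open>Third derivative: \<open>D\<^sup>3f(x)[h,h,h] = h^T (DH(x)[h]) h\<close>.\<close>
definition LHSCB ::
  "(real^'n) set \<Rightarrow> (real^'n \<Rightarrow> real) \<Rightarrow> (real^'n \<Rightarrow> real^'n) \<Rightarrow> (real^'n \<Rightarrow> real^'n^'n)
     \<Rightarrow> real \<Rightarrow> bool" where
  "LHSCB K f g H \<nu> \<longleftrightarrow>
     strictly_convex_on (interior K) f \<and>
     (\<forall>x\<in>interior K.
        (f has_derivative (\<lambda>h. g x \<bullet> h)) (at x) \<and>
        (g has_derivative (\<lambda>h. H x *v h)) (at x) \<and>
        H differentiable (at x) \<and>
        invertible (H x) \<and>
        (\<forall>T h. (H has_derivative T) (at x) \<longrightarrow>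
            \<bar>h \<bullet> (T h *v h)\<bar> \<le> 2 * (h \<bullet> (H x *v h)) powr (3/2))) \<and>
     (\<forall>p\<in>frontier K. filterlim f at_top (at p within interior K)) \<and>
     bdd_above {g x \<bullet> (matrix_inv (H x) *v g x) | x. x \<in> interior K} \<and>
     \<nu> = Sup {g x \<bullet> (matrix_inv (H x) *v g x) | x. x \<in> interior K} \<and>
     (\<forall>x\<in>interior K. \<forall>t>0. f (t *\<^sub>R x) = f x - \<nu> * ln t)"

definition strictly_feasible ::
  "(real^'n) set \<Rightarrow> real^'n^'m \<Rightarrow> real^'m \<Rightarrow> real^'n \<Rightarrow> real^'n \<Rightarrow> real^'m \<Rightarrow> real^'n \<Rightarrow> bool" where
  "strictly_feasible K A b c x y s \<longleftrightarrow>
     x \<in> interior K \<and> s \<in> interior (dual_cone K) \<and> A *v x = b \<and> transpose A *v y + s = c"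

definition nbhd ::
  "(real^'n) set \<Rightarrow> (real^'n \<Rightarrow> real^'n) \<Rightarrow> (real^'n \<Rightarrow> real^'n^'n) \<Rightarrow>
     real^'n^'m \<Rightarrow> real^'m \<Rightarrow> real^'n \<Rightarrow> real \<Rightarrow> real \<Rightarrow> ((real^'n) \<times> (real^'m) \<times> (real^'n)) set" where
  "nbhd K g H A b c \<eta> \<tau> = {(x, y, s). strictly_feasible K A b c x y s \<and>
      dual_local_norm (H x) (s + \<tau> *\<^sub>R g x) \<le> \<eta> * \<tau>}"

end

theory Submission
  imports Defs
begin

lemma eps_deriv:
  assumes "(F has_derivative F') (at x)" "e > 0"
  shows "\<exists>d>0. \<forall>v. norm v < d \<longrightarrow> norm (F (x+v) - F x - F' v) \<le> e * norm v"
proof -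
  from assms(1)[unfolded has_derivative_at_alt] assms(2) obtain d where
    "d>0" "\<forall>y. norm(y - x) < d \<longrightarrow> norm (F y - F x - F'(y - x)) \<le> e * norm (y - x)" by blast
  then show ?thesis by (metis add_diff_cancel_left')
qed

lemma tangent:
  fixes f :: "real^'n \<Rightarrow> real"
  assumes sc: "strictly_convex_on S f" and xS: "x \<in> S" and yS: "y \<in> S"
    and df: "(f has_derivative (\<lambda>h. G \<bullet> h)) (at x)"
  shows "G \<bullet> (y - x) \<le> f y - f x"
proof (rule ccontr)
  assume neg: "\<not> ?thesis"
  then have xy: "x \<noteq> y" by auto
  define N where "N = norm (y - x)"
  have N: "N > 0" using xy by (simp add: N_def)
  define e where "e = (G \<bullet> (y - x) - (f y - f x)) / (2 * N)"
  have e: "e > 0" using neg N by (simp add: e_def)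
  obtain d where d: "d > 0" "\<forall>v. norm v < d \<longrightarrow> norm (f (x+v) - f x - G \<bullet> v) \<le> e * norm v"
    using eps_deriv[OF df e] by blast
  define u where "u = min (1/2) (d / (2*N))"
  have u: "0 < u" "u < 1" "u * N < d" using d N by (auto simp: u_def min_def field_simps)
  define v where "v = u *\<^sub>R (y - x)"
  have nv: "norm v = u * N" using u by (simp add: v_def N_def)
  have pt: "(1 - u) *\<^sub>R x + u *\<^sub>R y = x + v" by (simp add: v_def algebra_simps)
  have lt: "f (x + v) < (1 - u) * f x + u * f y"
    using sc xS yS xy u pt unfolding strictly_convex_on_def by metis
  have "norm (f (x+v) - f x - G \<bullet> v) \<le> e * (u * N)" using d(2) u nv by metis
  then have "f (x+v) - f x - G \<bullet> v \<ge> - (e * (u * N))" by (simp add: abs_le_iff)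
  moreover have "G \<bullet> v = u * (G \<bullet> (y - x))" by (simp add: v_def)
  ultimately have "u * (G \<bullet> (y - x)) - e * (u * N) < u * (f y - f x)" using lt
    by (simp add: algebra_simps)
  then have "u * (G \<bullet> (y - x) - e * N) < u * (f y - f x)" by (simp add: algebra_simps)
  then have "G \<bullet> (y - x) - e * N < f y - f x" using u by simp
  moreover have "e * N = (G \<bullet> (y - x) - (f y - f x)) / 2" using N by (simp add: e_def)
  moreover have "\<And>a b c::real. a - c < b \<Longrightarrow> c = (a-b)/2 \<Longrightarrow> \<not> a \<le> b \<Longrightarrow> False" by (simp add: field_simps)
  ultimately show False using neg by blast
qed

lemma psd_lemma:
  fixes f :: "real^'n \<Rightarrow> real" and g :: "real^'n \<Rightarrow> real^'n" and M :: "real^'n^'n"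
  assumes sc: "strictly_convex_on S f" and S: "open S" and xS: "x \<in> S"
    and dfS: "\<forall>z\<in>S. (f has_derivative (\<lambda>h. g z \<bullet> h)) (at z)"
    and dg: "(g has_derivative (\<lambda>h. M *v h)) (at x)"
  shows "0 \<le> h \<bullet> (M *v h)"
proof (rule ccontr)
  assume neg: "\<not> ?thesis"
  then have h0: "h \<noteq> 0" by auto
  define \<epsilon> where "\<epsilon> = - (h \<bullet> (M *v h)) / 2"
  have \<epsilon>: "\<epsilon> > 0" using neg by (simp add: \<epsilon>_def)
  define e where "e = \<epsilon> / (norm h)^2"
  have e: "e > 0" using \<epsilon> h0 by (simp add: e_def)
  obtain d where d: "d > 0" "\<forall>v. norm v < d \<longrightarrow> norm (g (x+v) - g x - M *v v) \<le> e * norm v"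
    using eps_deriv[OF dg e] by blast
  obtain r where r: "r > 0" "ball x r \<subseteq> S" using S xS openE by blast
  define t where "t = min d r / (2 * norm h)"
  have t: "t > 0" "t * norm h < d" "t * norm h < r" using d r h0 by (auto simp: t_def min_def field_simps)
  define y where "y = x + t *\<^sub>R h"
  have yS: "y \<in> S" using r t by (auto simp: y_def dist_norm intro!: subsetD[OF r(2)])
  have t1: "g x \<bullet> (y - x) \<le> f y - f x" using tangent[OF sc xS yS] dfS xS by blast
  have t2: "g y \<bullet> (x - y) \<le> f x - f y" using tangent[OF sc yS xS] dfS yS by blast
  have "t * ((g y - g x) \<bullet> h) \<ge> 0"
  proof -
    have "(g y - g x) \<bullet> (y - x) \<ge> 0" using t1 t2
      by (smt (verit) inner_diff_left inner_minus_right minus_diff_eq)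
    then show ?thesis by (simp add: y_def)
  qed
  then have mono: "(g y - g x) \<bullet> h \<ge> 0" using t by (simp add: zero_le_mult_iff)
  have "norm (g y - g x - M *v (t *\<^sub>R h)) \<le> e * (t * norm h)"
    using d(2)[rule_format, of "t *\<^sub>R h"] t by (simp add: y_def)
  then have "\<bar>(g y - g x - M *v (t *\<^sub>R h)) \<bullet> h\<bar> \<le> e * (t * norm h) * norm h"
    by (meson Cauchy_Schwarz_ineq2 mult_right_mono norm_ge_zero order_trans)
  also have "\<dots> = t * \<epsilon>" using h0 by (simp add: e_def power2_eq_square)
  finally have "(g y - g x) \<bullet> h \<le> t * ((M *v h) \<bullet> h) + t * \<epsilon>"
    by (simp add: inner_diff_left matrix_vector_mult_scaleR abs_le_iff)
  also have "\<dots> = t * (\<epsilon> * -1)" by (simp add: \<epsilon>_def inner_commute algebra_simps)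
  also have "\<dots> < 0" using t \<epsilon> by (simp add: mult_pos_neg)
  finally show False using mono by simp
qed

lemma in_ball_add: "norm (u::'a::real_normed_vector) < r \<Longrightarrow> x + u \<in> ball x r"
  by (simp add: dist_norm)

lemma delta_bound:
  fixes f :: "real^'n \<Rightarrow> real" and g :: "real^'n \<Rightarrow> real^'n" and M :: "real^'n^'n"
  assumes r: "ball x r \<subseteq> S"
    and dfS: "\<forall>z\<in>S. (f has_derivative (\<lambda>h. g z \<bullet> h)) (at z)"
    and hd: "\<forall>v. norm v < d \<longrightarrow> norm (g (x+v) - g x - M *v v) \<le> e * norm v"
    and e0: "e \<ge> 0" and t: "t > 0" "t * (norm h + norm k) < d" "t * (norm h + norm k) < r"
  shows "\<bar>f (x + t *\<^sub>R h + t *\<^sub>R k) - f (x + t *\<^sub>R h) - f (x + t *\<^sub>R k) + f x - t^2 * ((M *v k) \<bullet> h)\<bar>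
     \<le> t^2 * (e * ((2 * norm h + norm k) * norm h))"
proof -
  define \<psi> where "\<psi> = (\<lambda>a. f (x + a *\<^sub>R h + t *\<^sub>R k) - f (x + a *\<^sub>R h))"
  define D where "D = (\<lambda>a. (g (x + a *\<^sub>R h + t *\<^sub>R k) - g (x + a *\<^sub>R h)) \<bullet> h)"
  have inS1: "x + a *\<^sub>R h + t *\<^sub>R k \<in> S" if "0 \<le> a" "a \<le> t" for a
  proof -
    have "norm (a *\<^sub>R h + t *\<^sub>R k) \<le> a * norm h + t * norm k"
      using that by (metis abs_of_nonneg norm_scaleR norm_triangle_le order_refl t(1) less_imp_le)
    also have "\<dots> \<le> t * (norm h + norm k)" using that
      by (simp add: distrib_left mult_right_mono)
    finally have "norm (a *\<^sub>R h + t *\<^sub>R k) < r" using t by linarith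
    then have "x + (a *\<^sub>R h + t *\<^sub>R k) \<in> ball x r" by (rule in_ball_add)
    then show ?thesis using r by (auto simp: add.assoc)
  qed
  have inS2: "x + a *\<^sub>R h \<in> S" if "0 \<le> a" "a \<le> t" for a
  proof -
    have "norm (a *\<^sub>R h) \<le> t * (norm h + norm k)" using that
      by (simp add: distrib_left mult_right_mono add_increasing2)
    then have "norm (a *\<^sub>R h) < r" using t by linarith
    then have "x + a *\<^sub>R h \<in> ball x r" by (rule in_ball_add)
    then show ?thesis using r by auto
  qed
  have der: "(\<psi> has_derivative (\<lambda>z. z * D a)) (at a within {0..t})" if "0 \<le> a" "a \<le> t" for a
  proof -
    have i1: "((\<lambda>a. x + a *\<^sub>R h + t *\<^sub>R k) has_derivative (\<lambda>z. z *\<^sub>R h)) (at a within {0..t})"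
      by (auto intro!: derivative_eq_intros)
    have i2: "((\<lambda>a. x + a *\<^sub>R h) has_derivative (\<lambda>z. z *\<^sub>R h)) (at a within {0..t})"
      by (auto intro!: derivative_eq_intros)
    have c1: "((\<lambda>a. f (x + a *\<^sub>R h + t *\<^sub>R k)) has_derivative (\<lambda>z. g (x + a *\<^sub>R h + t *\<^sub>R k) \<bullet> (z *\<^sub>R h))) (at a within {0..t})"
      using has_derivative_compose[OF i1, of f] dfS inS1[OF that] by blast
    have c2: "((\<lambda>a. f (x + a *\<^sub>R h)) has_derivative (\<lambda>z. g (x + a *\<^sub>R h) \<bullet> (z *\<^sub>R h))) (at a within {0..t})"
      using has_derivative_compose[OF i2, of f] dfS inS2[OF that] by blast
    show ?thesis unfolding \<psi>_def
      by (rule has_derivative_eq_rhs[OF has_derivative_diff[OF c1 c2]])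
         (simp add: fun_eq_iff D_def inner_diff_left right_diff_distrib)
  qed
  obtain a where a: "a \<in> {0<..<t}" "\<psi> t - \<psi> 0 = (t - 0) * D a"
    using mvt_simple[OF t(1) der] by blast
  define u1 where "u1 = a *\<^sub>R h + t *\<^sub>R k"
  define u2 where "u2 = a *\<^sub>R h"
  have a0: "0 < a" "a < t" using a(1) by auto
  have nu1: "norm u1 \<le> t * norm h + t * norm k"
  proof -
    have "norm u1 \<le> norm (a *\<^sub>R h) + norm (t *\<^sub>R k)" unfolding u1_def by (rule norm_triangle_ineq)
    also have "\<dots> = a * norm h + t * norm k" using a0 by simp
    also have "\<dots> \<le> t * norm h + t * norm k" using a0 by (simp add: mult_right_mono)
    finally show ?thesis .
  qed
  have nu2: "norm u2 \<le> t * norm h" using a0 by (simp add: u2_def mult_right_mono)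
  have "t * norm h + t * norm k < d" using t(2) by (simp add: distrib_left)
  then have b1: "norm (g (x+u1) - g x - M *v u1) \<le> e * norm u1"
    using hd nu1 by auto
  have "t * norm h \<le> t * norm h + t * norm k" using t(1) by simp
  then have b2: "norm (g (x+u2) - g x - M *v u2) \<le> e * norm u2"
    using hd nu2 \<open>t * norm h + t * norm k < d\<close> by auto
  have Mu: "M *v u1 = M *v u2 + t *\<^sub>R (M *v k)"
    by (simp add: u1_def u2_def matrix_vector_right_distrib matrix_vector_mult_scaleR)
  have eqv: "g (x+u1) - g (x+u2) - t *\<^sub>R (M *v k) = (g (x+u1) - g x - M *v u1) - (g (x+u2) - g x - M *v u2)"
    by (simp add: Mu algebra_simps)
  have "norm (g (x+u1) - g (x+u2) - t *\<^sub>R (M *v k)) \<le> e * norm u1 + e * norm u2"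
    unfolding eqv using b1 b2 norm_triangle_ineq4 by (smt (verit))
  also have "\<dots> \<le> e * (t * norm h + t * norm k) + e * (t * norm h)"
    using nu1 nu2 e0 by (simp add: add_mono mult_left_mono)
  also have "\<dots> = t * (e * (2 * norm h + norm k))" by (simp add: algebra_simps)
  finally have nb: "norm (g (x+u1) - g (x+u2) - t *\<^sub>R (M *v k)) \<le> t * (e * (2 * norm h + norm k))" .
  have "D a - t * ((M *v k) \<bullet> h) = (g (x+u1) - g (x+u2) - t *\<^sub>R (M *v k)) \<bullet> h"
    by (simp add: D_def u1_def u2_def add.assoc inner_diff_left)
  then have "\<bar>D a - t * ((M *v k) \<bullet> h)\<bar> \<le> t * (e * (2 * norm h + norm k)) * norm h"
    using nb by (metis Cauchy_Schwarz_ineq2 mult_right_mono norm_ge_zero order_trans)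
  moreover have "f (x + t *\<^sub>R h + t *\<^sub>R k) - f (x + t *\<^sub>R h) - f (x + t *\<^sub>R k) + f x - t^2 * ((M *v k) \<bullet> h)
      = t * (D a - t * ((M *v k) \<bullet> h))"
    using a(2) by (simp add: \<psi>_def power2_eq_square algebra_simps)
  ultimately have "\<bar>f (x + t *\<^sub>R h + t *\<^sub>R k) - f (x + t *\<^sub>R h) - f (x + t *\<^sub>R k) + f x - t^2 * ((M *v k) \<bullet> h)\<bar>
      \<le> t * (t * (e * (2 * norm h + norm k)) * norm h)"
    using t(1) by (simp add: abs_mult mult_left_mono)
  then show ?thesis by (simp add: power2_eq_square algebra_simps)
qed

lemma hess_sym:
  fixes f :: "real^'n \<Rightarrow> real" and g :: "real^'n \<Rightarrow> real^'n" and M :: "real^'n^'n"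
  assumes S: "open S" and xS: "x \<in> S"
    and dfS: "\<forall>z\<in>S. (f has_derivative (\<lambda>h. g z \<bullet> h)) (at z)"
    and dg: "(g has_derivative (\<lambda>h. M *v h)) (at x)"
  shows "(M *v k) \<bullet> h = (M *v h) \<bullet> k"
proof -
  define C where "C = (2 * norm h + norm k) * norm h + (2 * norm k + norm h) * norm k + 1"
  have "0 \<le> (2 * norm h + norm k) * norm h" "0 \<le> (2 * norm k + norm h) * norm k" by simp_all
  then have C: "C > 0" unfolding C_def by linarith
  obtain r where r: "r > 0" "ball x r \<subseteq> S" using S xS openE by blast
  have "\<forall>\<epsilon>>0. \<bar>(M *v k) \<bullet> h - (M *v h) \<bullet> k\<bar> \<le> \<epsilon>"
  proof (intro allI impI)
    fix \<epsilon> :: real assume \<epsilon>: "\<epsilon> > 0"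
    show "\<bar>(M *v k) \<bullet> h - (M *v h) \<bullet> k\<bar> \<le> \<epsilon>"
  proof -
    define e where "e = \<epsilon> / C"
    have e: "e > 0" using \<epsilon> C by (simp add: e_def)
    obtain d where d: "d > 0" "\<forall>v. norm v < d \<longrightarrow> norm (g (x+v) - g x - M *v v) \<le> e * norm v"
      using eps_deriv[OF dg e] by blast
    define t where "t = min d r / (2 * (norm h + norm k + 1))"
    define m where "m = min d r"
    define N where "N = norm h + norm k"
    have m: "m > 0" "m \<le> d" "m \<le> r" using d r by (auto simp: m_def)
    have N: "N \<ge> 0" by (simp add: N_def)
    have N2: "2 * (N + 1) > 0" using N by simp
    have tm: "t * (2 * (N + 1)) = m" using N2 unfolding t_def m_def[symmetric] N_def[symmetric] by simp
    have t0: "t > 0" using m N by (simp add: t_def m_def[symmetric] N_def[symmetric])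
    have "t * N < t * (2 * (N + 1))" using t0 N by (intro mult_strict_left_mono) auto
    then have "t * N < m" using tm by simp
    then have t: "t > 0" "t * (norm h + norm k) < d" "t * (norm h + norm k) < r"
      using t0 m by (auto simp: N_def)
    have t': "t > 0" "t * (norm k + norm h) < d" "t * (norm k + norm h) < r"
      using t by (simp_all add: add.commute)
    note B1 = delta_bound[OF r(2) dfS d(2) less_imp_le[OF e] t]
    note B2 = delta_bound[OF r(2) dfS d(2) less_imp_le[OF e] t']
    have sw: "x + t *\<^sub>R k + t *\<^sub>R h = x + t *\<^sub>R h + t *\<^sub>R k" by (simp add: algebra_simps)
    have "t^2 * \<bar>(M *v k) \<bullet> h - (M *v h) \<bullet> k\<bar> \<le> t^2 * (e * ((2 * norm h + norm k) * norm h)) + t^2 * (e * ((2 * norm k + norm h) * norm k))"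
    proof -
      have "t^2 * \<bar>(M *v k) \<bullet> h - (M *v h) \<bullet> k\<bar> = \<bar>t^2 * ((M *v k) \<bullet> h) - t^2 * ((M *v h) \<bullet> k)\<bar>"
        by (simp only: right_diff_distrib[symmetric] abs_mult abs_power2)
      then show ?thesis using B1 B2 unfolding sw by linarith
    qed
    also have "\<dots> \<le> t^2 * (e * C)"
      using e by (simp add: C_def algebra_simps mult_left_mono)
    also have "\<dots> = t^2 * \<epsilon>" using C by (simp add: e_def)
    finally show ?thesis using t(1) by simp
  qed
  qed
  then show ?thesis
  proof (rule contrapos_pp)
    assume "(M *v k) \<bullet> h \<noteq> (M *v h) \<bullet> k"
    then have p: "\<bar>(M *v k) \<bullet> h - (M *v h) \<bullet> k\<bar> > 0" by simp
    show "\<not> (\<forall>\<epsilon>>0. \<bar>(M *v k) \<bullet> h - (M *v h) \<bullet> k\<bar> \<le> \<epsilon>)"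
    proof
      assume "\<forall>\<epsilon>>0. \<bar>(M *v k) \<bullet> h - (M *v h) \<bullet> k\<bar> \<le> \<epsilon>"
      then have "\<bar>(M *v k) \<bullet> h - (M *v h) \<bullet> k\<bar> \<le> \<bar>(M *v k) \<bullet> h - (M *v h) \<bullet> k\<bar> / 2"
        using p by (meson half_gt_zero)
      then show False using p by (simp add: field_simps)
    qed
  qed
qed

lemma mv_neg: "(A::real^'n^'m) *v (- v) = - (A *v v)"
  by (simp add: vec_eq_iff matrix_vector_mult_def sum_negf)

lemma minv_both:
  fixes M :: "real^'n^'n"
  assumes "invertible M"
  shows "M ** matrix_inv M = mat 1" "matrix_inv M ** M = mat 1"
  using someI_ex[OF assms[unfolded invertible_def]] unfolding matrix_inv_def by auto

theorem lemma2p3: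
  fixes K :: "(real^'n) set" and f :: "real^'n \<Rightarrow> real"
    and g :: "real^'n \<Rightarrow> real^'n" and H :: "real^'n \<Rightarrow> real^'n^'n"
    and \<nu> \<eta> \<tau> :: real
    and A :: "real^'n^'m" and b :: "real^'m" and c :: "real^'n"
    and x s dx ds :: "real^'n" and y dy :: "real^'m"
  assumes "proper_cone K"
    and "LHSCB K f g H \<nu>"
    and "rank A = CARD('m)"
    and "\<eta> > 0" and "\<tau> > 0"
    and "(x, y, s) \<in> nbhd K g H A b c \<eta> \<tau>"
    and "A *v dx = 0"
    and "transpose A *v dy + ds = 0"
    and "\<tau> *\<^sub>R (H x *v dx) + ds = - (s + \<tau> *\<^sub>R g x)"
  shows "\<tau> * (\<nu> - \<eta>\<^sup>2) \<le> (x + dx) \<bullet> (s + ds) \<and> (x + dx) \<bullet> (s + ds) \<le> \<tau> * \<nu>"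
proof -
  define S where "S = interior K"
  have S: "open S" by (simp add: S_def)
  note L = assms(2)[unfolded LHSCB_def, folded S_def]
  have sc: "strictly_convex_on S f" using L by blast
  have dfS: "\<forall>z\<in>S. (f has_derivative (\<lambda>h. g z \<bullet> h)) (at z)" using L by blast
  have dgS: "\<forall>z\<in>S. (g has_derivative (\<lambda>h. H z *v h)) (at z)" using L by blast
  have invS: "\<forall>z\<in>S. invertible (H z)" using L by blast
  have hom: "\<forall>z\<in>S. \<forall>t>0. f (t *\<^sub>R z) = f z - \<nu> * ln t" using L by blast
  have xS: "x \<in> S" and nb: "dual_local_norm (H x) (s + \<tau> *\<^sub>R g x) \<le> \<eta> * \<tau>"
    using assms(6) by (auto simp: nbhd_def strictly_feasible_def S_def)
  have euler: "g z \<bullet> z = - \<nu>" if zS: "z \<in> S" for z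
  proof -
    have i: "((\<lambda>t::real. t *\<^sub>R z) has_derivative (\<lambda>t. t *\<^sub>R z)) (at 1)"
      by (auto intro!: derivative_eq_intros)
    have fz: "(f has_derivative (\<lambda>h. g z \<bullet> h)) (at ((\<lambda>t::real. t *\<^sub>R z) 1))"
      using dfS zS by simp
    have "((\<lambda>t. f (t *\<^sub>R z)) has_derivative (\<lambda>t. g z \<bullet> (t *\<^sub>R z))) (at 1)"
      using has_derivative_compose[OF i fz] by simp
    then have F: "((\<lambda>t. f (t *\<^sub>R z)) has_field_derivative (g z \<bullet> z)) (at 1)"
      unfolding has_field_derivative_def
      by (rule has_derivative_eq_rhs) (simp add: fun_eq_iff mult.commute)
    have G: "((\<lambda>t. f z - \<nu> * ln t) has_field_derivative (- \<nu>)) (at 1)"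
      by (auto intro!: derivative_eq_intros)
    have G2: "((\<lambda>t. f (t *\<^sub>R z)) has_field_derivative (- \<nu>)) (at 1)"
      by (rule has_field_derivative_transform_within_open[OF G, of "{0<..}"]) (use hom zS in auto)
    show ?thesis using DERIV_unique[OF F G2] .
  qed
  have E1: "x \<bullet> (H x *v h) = - (g x \<bullet> h)" for h
  proof -
    have d1: "((\<lambda>z. g z \<bullet> z) has_derivative (\<lambda>h. g x \<bullet> h + (H x *v h) \<bullet> x)) (at x)"
      using dgS xS by (auto intro!: derivative_eq_intros)
    have d2: "((\<lambda>z. g z \<bullet> z) has_derivative (\<lambda>h. 0)) (at x)"
      by (rule has_derivative_transform_within_open[OF has_derivative_const S xS]) (use euler in auto)
    have "(\<lambda>h. g x \<bullet> h + (H x *v h) \<bullet> x) = (\<lambda>h. 0)" using has_derivative_unique[OF d1 d2] .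
    then have "g x \<bullet> h + (H x *v h) \<bullet> x = 0" by meson
    then show ?thesis by (simp add: inner_commute add_eq_0_iff)
  qed
  have E2: "g x \<bullet> x = - \<nu>" using euler xS .
  define M where "M = H x"
  have dg: "(g has_derivative (\<lambda>h. M *v h)) (at x)" using dgS xS by (simp add: M_def)
  have sym: "(M *v k) \<bullet> h = (M *v h) \<bullet> k" for h k using hess_sym[OF S xS dfS dg] .
  have psd: "0 \<le> h \<bullet> (M *v h)" for h using psd_lemma[OF sc S xS dfS dg] .
  have E3: "dx \<bullet> ds = 0"
  proof -
    have "ds = - (dy v* A)" using assms(8) by (simp add: eq_neg_iff_add_eq_0 add.commute)
    then have "dx \<bullet> ds = - ((dy v* A) \<bullet> dx)" by (simp add: inner_commute)
    also have "\<dots> = 0" by (simp add: dot_lmul_matrix assms(7))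
    finally show ?thesis .
  qed
  define r where "r = s + \<tau> *\<^sub>R g x"
  define Q where "Q = dx \<bullet> (M *v dx)"
  have dseq: "ds = - r - \<tau> *\<^sub>R (M *v dx)" using assms(9) by (simp add: r_def M_def algebra_simps)
  have main: "(x + dx) \<bullet> (s + ds) = \<tau> * \<nu> - \<tau> * Q"
  proof -
    have a1: "(x+dx) \<bullet> (s+ds) = x \<bullet> s + x \<bullet> ds + dx \<bullet> s + dx \<bullet> ds" by (simp add: inner_add algebra_simps)
    have a2: "x \<bullet> ds = -(x \<bullet> s) - \<tau> * (g x \<bullet> x) - \<tau> * (x \<bullet> (M *v dx))"
      by (simp add: dseq r_def inner_diff_right inner_add_right inner_commute)
    have a3: "dx \<bullet> ds = -(dx \<bullet> s) - \<tau> * (g x \<bullet> dx) - \<tau> * Q"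
      by (simp add: dseq r_def Q_def inner_diff_right inner_add_right inner_commute)
    have a4: "x \<bullet> (M *v dx) = - (g x \<bullet> dx)" using E1 by (simp add: M_def)
    show ?thesis using a1 a2 a3 a4 E2 E3 by (simp add: algebra_simps)
  qed
  have Q0: "Q \<ge> 0" using psd by (simp add: Q_def)
  define Mi where "Mi = matrix_inv M"
  have inv: "M ** Mi = mat 1" "Mi ** M = mat 1" using minv_both invS xS by (auto simp: Mi_def M_def)
  define w where "w = Mi *v ds"
  have Mw: "M *v w = ds" by (simp add: w_def matrix_vector_mul_assoc inv)
  define z where "z = \<tau> *\<^sub>R dx + w"
  have Mz: "M *v z = - r" using dseq
    by (simp add: z_def matrix_vector_right_distrib matrix_vector_mult_scaleR Mw)
  have Miz: "Mi *v r = - z"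
  proof -
    have "Mi *v r = - (Mi *v (M *v z))" using Mz by (simp add: mv_neg)
    also have "\<dots> = - z" by (simp add: matrix_vector_mul_assoc inv)
    finally show ?thesis .
  qed
  have val: "r \<bullet> (Mi *v r) = (M *v z) \<bullet> z" using Mz Miz by simp
  have val0: "r \<bullet> (Mi *v r) \<ge> 0" using val psd by (simp add: inner_commute)
  have "(M *v z) \<bullet> z = \<tau>^2 * Q + \<tau> * ((M *v dx) \<bullet> w) + \<tau> * ((M *v w) \<bullet> dx) + (M *v w) \<bullet> w"
    by (simp add: z_def matrix_vector_right_distrib matrix_vector_mult_scaleR inner_add_left inner_add_right
        Q_def inner_commute power2_eq_square algebra_simps)
  moreover have "(M *v w) \<bullet> dx = 0" using Mw E3 by (simp add: inner_commute)
  moreover have "(M *v dx) \<bullet> w = 0" using sym[of dx w] Mw E3 by (simp add: inner_commute)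
  moreover have "(M *v w) \<bullet> w \<ge> 0" using psd[of w] by (simp add: inner_commute)
  ultimately have lowv: "\<tau>^2 * Q \<le> r \<bullet> (Mi *v r)" using val by simp
  have "sqrt (r \<bullet> (Mi *v r)) \<le> \<eta> * \<tau>" using nb by (simp add: dual_local_norm_def r_def Mi_def M_def)
  then have "r \<bullet> (Mi *v r) \<le> (\<eta> * \<tau>)^2" using val0 assms(4,5)
    by (metis real_sqrt_le_iff real_sqrt_pow2 power2_eq_square real_sqrt_mult_self mult_pos_pos less_imp_le sqrt_le_D)
  then have "\<tau>^2 * Q \<le> \<tau>^2 * \<eta>^2" using lowv by (simp add: power_mult_distrib mult.commute)
  then have Qb: "Q \<le> \<eta>^2" using assms(5) by simp
  show ?thesis
  proof
    show "\<tau> * (\<nu> - \<eta>\<^sup>2) \<le> (x + dx) \<bullet> (s + ds)" unfolding main using Qb assms(5)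
      by (simp add: right_diff_distrib mult_left_mono)
    show "(x + dx) \<bullet> (s + ds) \<le> \<tau> * \<nu>" unfolding main using Q0 assms(5) by simp
  qed
qed

end
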